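(* Let $\mu$ be a positive finite Borel measure on $\mathbb{R}^d$ and $0<\beta\le d$, and assume there exist $\varphi\in L^2(\mu)$ with $\|\varphi\|_{L^2(\mu)}>0$ and a constant $C>0$ such that $|(\varphi\mu)^\wedge(t)|\le C|t|^{-\beta/2}$ for all $t\in\mathbb{R}^d$. Let $\Lambda\subset\mathbb{R}^d$ be countable such that $E(\Lambda)$ is a Fourier frame for $L^2(\mu)$. If $\alpha$ is a real number for which there is a constant $C'$ with $\#\big(\Lambda\cap B(0,r)\big)\le C' r^\alpha$ for all $r\ge1$, then $$\alpha\ge\Big(\frac1\beta+\frac1d\Big)^{-1}.$$
   Context: For a finite complex measure $\nu$ on $\mathbb{R}^d$, $\widehat{\nu}(t)=\int e^{-2\pi i\langle t,x\rangle}d\nu(x)$; $\varphi\mu$ denotes the complex measure with density $\varphi$ with respect to $\mu$. For $\lambda\in\mathbb{R}^d$, $e_\lambda(x)=e^{2\pi i\langle\lambda,x\rangle}$, $E(\Lambda)=\{e_\lambda\}_{\lambda\in\Lambda}$. $E(\Lambda)$ is a Fourier frame for $L^2(\mu)$ if there are $0<A,B<\infty$ with $A\|f\|^2_{L^2(\mu)}\le\sum_{\lambda\in\Lambda}|\langle f,e_\lambda\rangle_{L^2(\mu)}|^2\le B\|f\|^2_{L^2(\mu)}$ for all $f\in L^2(\mu)$. $B(x,r)$ is the open ball of radius $r$ centered at $x$. *)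

theory Defs
  imports "HOL-Analysis.Analysis"
begin

definition expo :: "'a::euclidean_space \<Rightarrow> 'a \<Rightarrow> complex" where
  "expo l x = cis (2 * pi * (l \<bullet> x))"

definition in_L2 :: "'a measure \<Rightarrow> ('a \<Rightarrow> complex) \<Rightarrow> bool" where
  "in_L2 M f \<longleftrightarrow> f \<in> borel_measurable M \<and> integrable M (\<lambda>x. (cmod (f x))\<^sup>2)"

definition L2_norm_sq :: "'a measure \<Rightarrow> ('a \<Rightarrow> complex) \<Rightarrow> real" where
  "L2_norm_sq M f = (LINT x|M. (cmod (f x))\<^sup>2)"

definition L2_inner :: "'a measure \<Rightarrow> ('a \<Rightarrow> complex) \<Rightarrow> ('a \<Rightarrow> complex) \<Rightarrow> complex" where
  "L2_inner M f g = (LINT x|M. f x * cnj (g x))"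

text \<open>Fourier transform of the complex measure phi mu.\<close>
definition fourier_dens :: "'a::euclidean_space measure \<Rightarrow> ('a \<Rightarrow> complex) \<Rightarrow> 'a \<Rightarrow> complex" where
  "fourier_dens M \<phi> t = (LINT x|M. cis (- 2 * pi * (t \<bullet> x)) * \<phi> x)"

definition fourier_frame :: "'a::euclidean_space measure \<Rightarrow> 'a set \<Rightarrow> bool" where
  "fourier_frame M \<Lambda> \<longleftrightarrow> (\<exists>A B. (0::real) < A \<and> 0 < B \<and>
     (\<forall>f. in_L2 M f \<longrightarrow>
        (\<lambda>l. (cmod (L2_inner M f (expo l)))\<^sup>2) summable_on \<Lambda> \<and>
        A * L2_norm_sq M f \<le> (\<Sum>\<^sub>\<infinity>l\<in>\<Lambda>. (cmod (L2_inner M f (expo l)))\<^sup>2) \<and>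
        (\<Sum>\<^sub>\<infinity>l\<in>\<Lambda>. (cmod (L2_inner M f (expo l)))\<^sup>2) \<le> B * L2_norm_sq M f))"

end

theory Submission
  imports Defs
begin
lemma hole:
  fixes S :: "'a::euclidean_space set" and \<rho> :: real and m :: nat
  assumes fin: "finite S" and rho: "\<rho> > 0" and cardS: "card S < (2*m+1)^DIM('a)"
  shows "\<exists>c. norm c \<le> 2*\<rho>*m*DIM('a) \<and> (\<forall>l\<in>S. \<rho> \<le> norm (l - c))"
proof (rule ccontr)
  assume H: "\<not> ?thesis"
  define K where "K = PiE (Basis::'a set) (\<lambda>_. {-int m..int m})"
  define cen where "cen k = (\<Sum>b\<in>Basis. (2*\<rho>* of_int (k b)) *\<^sub>R b)" for k :: "'a \<Rightarrow> int"
  have cenb: "cen k \<bullet> b = 2*\<rho>* of_int (k b)" if "b \<in> Basis" for k b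
    unfolding cen_def using that by (simp add: inner_sum_left_Basis)
  have cardK: "card K = (2*m+1)^DIM('a)"
    unfolding K_def by (simp add: card_PiE nat_add_distrib nat_mult_distrib)
  have normc: "norm (cen k) \<le> 2*\<rho>*m*DIM('a)" if "k \<in> K" for k
  proof -
    have "norm (cen k) \<le> (\<Sum>b\<in>Basis. norm ((2*\<rho>* of_int (k b)) *\<^sub>R b))"
      unfolding cen_def by (rule norm_sum)
    also have "\<dots> \<le> (\<Sum>b\<in>(Basis::'a set). 2*\<rho>*m)"
    proof (rule sum_mono)
      fix b :: 'a assume b: "b \<in> Basis"
      then have "\<bar>k b\<bar> \<le> int m" using that unfolding K_def by (auto simp: PiE_def Pi_def)
      then have "\<bar>real_of_int (k b)\<bar> \<le> real m" by linarith
      then show "norm ((2*\<rho>* of_int (k b)) *\<^sub>R b) \<le> 2*\<rho>*m"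
        using b rho by (simp add: abs_mult)
    qed
    also have "\<dots> = 2*\<rho>*m*DIM('a)" by simp
    finally show ?thesis .
  qed
  have ex: "\<exists>l\<in>S. norm (l - cen k) < \<rho>" if "k \<in> K" for k
    using H normc[OF that] by force
  define f where "f k = (SOME l. l \<in> S \<and> norm (l - cen k) < \<rho>)" for k
  have f: "f k \<in> S \<and> norm (f k - cen k) < \<rho>" if "k \<in> K" for k
    unfolding f_def using someI_ex[OF ex[OF that, unfolded Bex_def]] .
  have "inj_on f K"
  proof (rule inj_onI)
    fix k k' assume k: "k \<in> K" and k': "k' \<in> K" and eq: "f k = f k'"
    show "k = k'"
    proof
      fix b :: 'a
      show "k b = k' b"
      proof (cases "b \<in> Basis")
        case True
        have "\<bar>(f k - cen k) \<bullet> b\<bar> < \<rho>" using Basis_le_norm[OF True, of "f k - cen k"] f[OF k] by linarith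
        moreover have "\<bar>(f k - cen k') \<bullet> b\<bar> < \<rho>" using Basis_le_norm[OF True, of "f k - cen k'"] f[OF k'] eq by (metis order_le_less_trans)
        ultimately have "\<bar>2*\<rho>* of_int (k b) - 2*\<rho>* of_int (k' b)\<bar> < 2*\<rho>"
          using cenb[OF True] by (simp add: inner_diff_left)
        then have "2*\<rho>*\<bar>of_int (k b) - of_int (k' b)\<bar> < 2*\<rho>*1"
          using rho by (simp add: abs_mult right_diff_distrib[symmetric])
        then have "\<bar>real_of_int (k b) - of_int (k' b)\<bar> < 1" using rho by (simp only: mult_less_cancel_left_pos)
        then show ?thesis by linarith
      next
        case False
        then show ?thesis using k k' unfolding K_def by (auto simp: PiE_def extensional_def)
      qed
    qed
  qed
  moreover have "f ` K \<subseteq> S" using f by auto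
  ultimately have "card K \<le> card S" using fin by (meson card_inj_on_le)
  then show False using cardS cardK by simp
qed

lemma dyadic:
  fixes x :: real assumes "1 \<le> x"
  shows "2 powr real (nat \<lfloor>log 2 x\<rfloor>) \<le> x \<and> x < 2 powr (real (nat \<lfloor>log 2 x\<rfloor>) + 1)"
proof -
  have l0: "0 \<le> log 2 x" using assms by simp
  have e: "real (nat \<lfloor>log 2 x\<rfloor>) = real_of_int \<lfloor>log 2 x\<rfloor>" using l0 by simp
  have a: "real_of_int \<lfloor>log 2 x\<rfloor> \<le> log 2 x" "log 2 x < real_of_int \<lfloor>log 2 x\<rfloor> + 1"
    by linarith+
  have "2 powr real (nat \<lfloor>log 2 x\<rfloor>) \<le> 2 powr (log 2 x)" using a e by simp
  moreover have "2 powr (log 2 x) < 2 powr (real (nat \<lfloor>log 2 x\<rfloor>) + 1)" using a e by simp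
  ultimately show ?thesis using assms by simp
qed

lemma geo_bound:
  fixes q :: real assumes "0 \<le> q" "q < 1"
  shows "(\<Sum>i<n. q^i) \<le> 1 / (1 - q)"
  using assms by (simp add: sum_gp_strict divide_right_mono)

lemma far_sum:
  fixes \<Lambda> :: "'a::euclidean_space set" and g :: "'a \<Rightarrow> real"
  assumes cnt: "\<forall>r\<ge>1. finite (\<Lambda> \<inter> ball 0 r) \<and> real (card (\<Lambda> \<inter> ball 0 r)) \<le> C' * r powr \<alpha>"
    and ab: "\<alpha> < \<beta>" and bpos: "0 < \<beta>" and T: "T \<ge> 1" and K: "0 \<le> K"
    and g: "\<And>l. l \<in> \<Lambda> \<Longrightarrow> norm l \<ge> T \<Longrightarrow> 0 \<le> g l \<and> g l \<le> K * norm l powr (-\<beta>)"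
    and summ: "g summable_on (\<Lambda> - ball 0 T)"
  shows "infsum g (\<Lambda> - ball 0 T) \<le> K * C' * 2 powr \<alpha> * T powr (\<alpha> - \<beta>) / (1 - 2 powr (\<alpha> - \<beta>))"
proof (rule infsum_le_finite_sums[OF summ])
  define q where "q = 2 powr (\<alpha> - \<beta>)"
  have q: "0 \<le> q" "q < 1" using ab powr_less_cancel_iff[of 2 "\<alpha>-\<beta>" 0] unfolding q_def by auto
  have C': "0 \<le> C'" using cnt[rule_format, of 1] by (metis of_nat_0_le_iff order_trans powr_one_eq_one mult_1_right order.refl)
  fix F assume F: "finite F" "F \<subseteq> \<Lambda> - ball 0 T"
  define idx where "idx l = nat \<lfloor>log 2 (norm l / T)\<rfloor>" for l :: 'a
  obtain N where N: "idx ` F \<subseteq> {..<N}"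
    using F(1) by (metis finite_imageI finite_nat_iff_bounded)
  have "sum g F = (\<Sum>k<N. sum g {l\<in>F. idx l = k})"
    using sum.group[OF F(1) _ N, of g] by simp
  also have "\<dots> \<le> (\<Sum>k<N. K * C' * 2 powr \<alpha> * T powr (\<alpha> - \<beta>) * q^k)"
  proof (rule sum_mono)
    fix k assume "k \<in> {..<N}"
    define a where "a = 2 powr real k * T"
    have apos: "a > 0" using T by (simp add: a_def)
    have mem: "l \<in> \<Lambda> \<and> a \<le> norm l \<and> norm l < 2 * a" if "l \<in> F" "idx l = k" for l
    proof -
      have lT: "norm l \<ge> T" "l \<in> \<Lambda>" using F that by auto
      have "1 \<le> norm l / T" using lT T by simp
      from dyadic[OF this] that(2) have "2 powr real k \<le> norm l / T" "norm l / T < 2 powr (real k + 1)"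
        unfolding idx_def by auto
      then show ?thesis using T lT by (simp add: a_def powr_add field_simps)
    qed
    have sub: "{l\<in>F. idx l = k} \<subseteq> \<Lambda> \<inter> ball 0 (2*a)" using mem by auto
    have "1 \<le> 2 powr real k" by (rule ge_one_powr_ge_zero) auto
    then have "T \<le> a" using T mult_right_mono[of 1 "2 powr real k" T] unfolding a_def by simp
    then have a1: "2*a \<ge> 1" using T by linarith
    have cardk: "real (card {l\<in>F. idx l = k}) \<le> C' * (2*a) powr \<alpha>"
    proof -
      have fin: "finite (\<Lambda> \<inter> ball 0 (2*a))" using cnt a1 by blast
      have "card {l\<in>F. idx l = k} \<le> card (\<Lambda> \<inter> ball 0 (2*a))" using card_mono[OF fin sub] .
      then have "real (card {l\<in>F. idx l = k}) \<le> real (card (\<Lambda> \<inter> ball 0 (2*a)))" by (rule of_nat_mono)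
      also have "\<dots> \<le> C' * (2*a) powr \<alpha>" using cnt a1 by blast
      finally show ?thesis .
    qed
    have "sum g {l\<in>F. idx l = k} \<le> (\<Sum>l\<in>{l\<in>F. idx l = k}. K * a powr (-\<beta>))"
    proof (rule sum_mono)
      fix l assume l: "l \<in> {l\<in>F. idx l = k}"
      then have m: "l \<in> \<Lambda>" "a \<le> norm l" using mem by auto
      have "norm l \<ge> T" using l F by auto
      then have "g l \<le> K * norm l powr (-\<beta>)" using g m by auto
      also have "\<dots> \<le> K * a powr (-\<beta>)"
      proof (rule mult_left_mono[OF _ K])
        have "0 \<le> \<beta>" using bpos by simp
        then show "norm l powr (-\<beta>) \<le> a powr (-\<beta>)" using powr_mono2'[of "-\<beta>" a "norm l"] m apos by simp
      qed
      finally show "g l \<le> K * a powr (-\<beta>)" .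
    qed
    also have "\<dots> = real (card {l\<in>F. idx l = k}) * (K * a powr (-\<beta>))" by simp
    also have "\<dots> \<le> C' * (2*a) powr \<alpha> * (K * a powr (-\<beta>))"
      using cardk K by (simp add: mult_right_mono)
    also have "\<dots> = K * C' * 2 powr \<alpha> * T powr (\<alpha> - \<beta>) * q^k"
    proof -
      have "(2*a) powr \<alpha> * a powr (-\<beta>) = 2 powr \<alpha> * (a powr \<alpha> * a powr (-\<beta>))"
        by (simp add: powr_mult)
      also have "a powr \<alpha> * a powr (-\<beta>) = a powr (\<alpha> - \<beta>)"
        by (simp add: powr_add[symmetric])
      finally have "(2*a) powr \<alpha> * a powr (-\<beta>) = 2 powr \<alpha> * a powr (\<alpha> - \<beta>)" .
      moreover have "a powr (\<alpha> - \<beta>) = T powr (\<alpha> - \<beta>) * q^k"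
      proof -
        have "a powr (\<alpha> - \<beta>) = (2 powr real k) powr (\<alpha> - \<beta>) * T powr (\<alpha> - \<beta>)"
          unfolding a_def by (rule powr_mult)
        also have "(2 powr real k) powr (\<alpha> - \<beta>) = q^k"
          unfolding q_def by (simp add: powr_powr powr_power)
        finally show ?thesis by (simp add: mult.commute)
      qed
      ultimately show ?thesis by (simp add: mult_ac)
    qed
    finally show "sum g {l\<in>F. idx l = k} \<le> K * C' * 2 powr \<alpha> * T powr (\<alpha> - \<beta>) * q^k" .
  qed
  also have "\<dots> = K * C' * 2 powr \<alpha> * T powr (\<alpha> - \<beta>) * (\<Sum>k<N. q^k)"
    by (simp add: sum_distrib_left)
  also have "\<dots> \<le> K * C' * 2 powr \<alpha> * T powr (\<alpha> - \<beta>) * (1 / (1 - q))"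
    using geo_bound[OF q] K C' by (intro mult_left_mono) auto
  finally show "sum g F \<le> K * C' * 2 powr \<alpha> * T powr (\<alpha> - \<beta>) / (1 - 2 powr (\<alpha> - \<beta>))"
    by (simp add: q_def)
qed

lemma expo_meas:
  fixes M :: "'a::euclidean_space measure"
  assumes "sets M = sets borel"
  shows "expo s \<in> borel_measurable M"
proof -
  have "continuous_on UNIV (expo s)" unfolding expo_def by (intro continuous_intros)
  then have "expo s \<in> borel_measurable borel" by (rule borel_measurable_continuous_onI)
  then show ?thesis using measurable_cong_sets[OF assms refl] by blast
qed

lemma translate:
  fixes M :: "'a::euclidean_space measure"
  assumes sets: "sets M = sets borel" and L2: "in_L2 M \<phi>"
  shows "in_L2 M (\<lambda>x. \<phi> x * expo s x)" "L2_norm_sq M (\<lambda>x. \<phi> x * expo s x) = L2_norm_sq M \<phi>"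
    "L2_inner M (\<lambda>x. \<phi> x * expo s x) (expo l) = fourier_dens M \<phi> (l - s)"
proof -
  have n: "cmod (\<phi> x * expo s x) = cmod (\<phi> x)" for x by (simp add: norm_mult expo_def)
  show "in_L2 M (\<lambda>x. \<phi> x * expo s x)"
    using L2 expo_meas[OF sets] unfolding in_L2_def n by auto
  show "L2_norm_sq M (\<lambda>x. \<phi> x * expo s x) = L2_norm_sq M \<phi>"
    unfolding L2_norm_sq_def n ..
  have e: "\<phi> x * expo s x * cnj (expo l x) = cis (- 2 * pi * ((l - s) \<bullet> x)) * \<phi> x" for x
  proof -
    have "expo s x * cnj (expo l x) = cis (- 2 * pi * ((l - s) \<bullet> x))"
      unfolding expo_def cis_cnj cis_mult by (simp add: inner_diff_left algebra_simps)
    then show ?thesis by (simp add: mult_ac)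
  qed
  show "L2_inner M (\<lambda>x. \<phi> x * expo s x) (expo l) = fourier_dens M \<phi> (l - s)"
    unfolding L2_inner_def fourier_dens_def e by (rule refl)
qed

lemma core:
  fixes M :: "'a::euclidean_space measure" and \<Lambda> :: "'a set" and \<alpha> \<beta> C C' :: real
  assumes sets: "sets M = sets borel"
    and bpos: "0 < \<beta>" and bd: "\<beta> \<le> real DIM('a)"
    and L2: "in_L2 M \<phi>" and Npos: "L2_norm_sq M \<phi> > 0" and Cpos: "C > 0"
    and dec: "\<forall>t. t \<noteq> 0 \<longrightarrow> cmod (fourier_dens M \<phi> t) \<le> C * norm t powr (- \<beta> / 2)"
    and frame: "fourier_frame M \<Lambda>"
    and cnt: "\<forall>r\<ge>1. finite (\<Lambda> \<inter> ball 0 r) \<and> real (card (\<Lambda> \<inter> ball 0 r)) \<le> C' * r powr \<alpha>"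
    and C'1: "C' \<ge> 1" and apos: "0 < \<alpha>" and alt: "\<alpha> < inverse (1/\<beta> + 1/real DIM('a))"
  shows False
proof -
  define N where "N = L2_norm_sq M \<phi>"
  obtain A B where AB: "0 < A" "0 < B" and fr0: "\<forall>f. in_L2 M f \<longrightarrow>
        (\<lambda>l. (cmod (L2_inner M f (expo l)))\<^sup>2) summable_on \<Lambda> \<and>
        A * L2_norm_sq M f \<le> (\<Sum>\<^sub>\<infinity>l\<in>\<Lambda>. (cmod (L2_inner M f (expo l)))\<^sup>2) \<and>
        (\<Sum>\<^sub>\<infinity>l\<in>\<Lambda>. (cmod (L2_inner M f (expo l)))\<^sup>2) \<le> B * L2_norm_sq M f"
    using frame unfolding fourier_frame_def by auto
  have fr: "(\<lambda>l. (cmod (L2_inner M f (expo l)))\<^sup>2) summable_on \<Lambda> \<and>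
        A * L2_norm_sq M f \<le> (\<Sum>\<^sub>\<infinity>l\<in>\<Lambda>. (cmod (L2_inner M f (expo l)))\<^sup>2)" if "in_L2 M f" for f
    using fr0 that by blast
  define g where "g s l = (cmod (fourier_dens M \<phi> (l - s)))\<^sup>2" for s l
  have low: "g s summable_on \<Lambda> \<and> A * N \<le> infsum (g s) \<Lambda>" for s
    using fr[OF translate(1)[OF sets L2, of s]] unfolding translate(2,3)[OF sets L2] g_def N_def by simp
  have g0: "0 \<le> g s l" for s l unfolding g_def by simp
  have gb: "g s l \<le> C\<^sup>2 * norm (l - s) powr (-\<beta>)" if "l \<noteq> s" for s l
  proof -
    have n: "norm (l - s) > 0" using that by simp
    have "cmod (fourier_dens M \<phi> (l - s)) \<le> C * norm (l - s) powr (- \<beta> / 2)"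
      using dec that by simp
    then have "g s l \<le> (C * norm (l - s) powr (- \<beta> / 2))\<^sup>2"
      unfolding g_def by (intro power_mono) auto
    also have "\<dots> = C\<^sup>2 * norm (l - s) powr (-\<beta>)"
      using n by (simp add: power_mult_distrib powr_power)
    finally show ?thesis .
  qed
  define d where "d = real DIM('a)"
  have d1: "d \<ge> 1" unfolding d_def by (simp add: DIM_positive Suc_le_eq)
  have tau: "inverse (1/\<beta> + 1/d) = \<beta> * d / (\<beta> + d)"
    using bpos d1 by (simp add: field_simps)
  have "\<alpha> * (\<beta> + d) < \<beta> * d" using alt tau bpos d1 unfolding d_def[symmetric]
    by (simp add: pos_less_divide_eq)
  then have e1: "\<alpha> + (\<alpha>/d - 1) * \<beta> < 0" using d1
    by (simp add: field_simps)
  have ab: "\<alpha> < \<beta>"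
  proof -
    have "\<alpha> * (\<beta> + d) < \<beta> * d" by fact
    moreover have "\<beta> * d \<le> \<beta> * (\<beta> + d)" using bpos by simp
    ultimately have "\<alpha> * (\<beta> + d) < \<beta> * (\<beta> + d)" by linarith
    moreover have "\<beta> + d > 0" using bpos d1 by simp
    ultimately show ?thesis by (simp add: mult_less_cancel_right_pos)
  qed
  define Nb where "Nb R = C\<^sup>2 * (C' * (2*R) powr \<alpha>) * (4 * d * (C' * (2*R) powr \<alpha>) powr (1/d) / R) powr \<beta>" for R
  define Fb where "Fb R = C\<^sup>2 * 2 powr \<beta> * C' * 2 powr \<alpha> * (2*R) powr (\<alpha> - \<beta>) / (1 - 2 powr (\<alpha> - \<beta>))" for R
  have lim: "((\<lambda>R. Nb R + Fb R) \<longlongrightarrow> 0) at_top"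
  proof -
    define K0 where "K0 = 4 * d * (C' powr (1/d) * 2 powr (\<alpha>/d))"
    define K1 where "K1 = C\<^sup>2 * C' * 2 powr \<alpha> * K0 powr \<beta>"
    define K2 where "K2 = C\<^sup>2 * 2 powr \<beta> * C' * 2 powr \<alpha> * 2 powr (\<alpha> - \<beta>) / (1 - 2 powr (\<alpha> - \<beta>))"
    have K0: "K0 > 0" using d1 C'1 by (simp add: K0_def)
    have NbE: "Nb R = K1 * R powr (\<alpha> + (\<alpha>/d - 1) * \<beta>)" if R: "R > 0" for R
    proof -
      have a: "(C' * (2*R) powr \<alpha>) powr (1/d) = C' powr (1/d) * 2 powr (\<alpha>/d) * R powr (\<alpha>/d)"
        using R C'1 by (simp add: powr_mult powr_powr)
      have b: "4 * d * (C' * (2*R) powr \<alpha>) powr (1/d) / R = K0 * R powr (\<alpha>/d - 1)"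
        unfolding a K0_def using R by (simp add: powr_diff)
      have c: "(K0 * R powr (\<alpha>/d - 1)) powr \<beta> = K0 powr \<beta> * R powr ((\<alpha>/d - 1) * \<beta>)"
        using R K0 by (simp add: powr_mult powr_powr)
      show ?thesis unfolding Nb_def b c K1_def
        using R by (simp add: powr_mult powr_add mult_ac)
    qed
    have FbE: "Fb R = K2 * R powr (\<alpha> - \<beta>)" if R: "R > 0" for R
      unfolding Fb_def K2_def using R by (simp add: powr_mult)
    have t1: "((\<lambda>R. K1 * R powr (\<alpha> + (\<alpha>/d - 1) * \<beta>)) \<longlongrightarrow> K1 * 0) at_top"
      by (intro tendsto_mult tendsto_const tendsto_neg_powr[OF e1] filterlim_ident)
    have t2: "((\<lambda>R. K2 * R powr (\<alpha> - \<beta>)) \<longlongrightarrow> K2 * 0) at_top"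
      using ab by (intro tendsto_mult tendsto_const tendsto_neg_powr filterlim_ident) auto
    have t: "((\<lambda>R. K1 * R powr (\<alpha> + (\<alpha>/d - 1) * \<beta>) + K2 * R powr (\<alpha> - \<beta>)) \<longlongrightarrow> 0) at_top"
      using tendsto_add[OF t1 t2] by simp
    have ev: "eventually (\<lambda>R. K1 * R powr (\<alpha> + (\<alpha>/d - 1) * \<beta>) + K2 * R powr (\<alpha> - \<beta>) = Nb R + Fb R) at_top"
      using eventually_gt_at_top[of 0] by eventually_elim (simp add: NbE FbE)
    show ?thesis using Lim_transform_eventually[OF t ev] .
  qed
  have bound: "A * N \<le> Nb R + Fb R" if R1: "R \<ge> 1" for R
  proof -
    define x where "x = C' * (2*R) powr \<alpha>"
    have "1 \<le> (2*R) powr \<alpha>" using R1 apos by (intro ge_one_powr_ge_zero) auto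
    then have x1: "x \<ge> 1" unfolding x_def using C'1 mult_mono[of 1 C' 1 "(2*R) powr \<alpha>"] by simp
    define S where "S = \<Lambda> \<inter> ball 0 (2*R)"
    have R21: "2*R \<ge> 1" using R1 by simp
    have finS: "finite S" and cardS: "real (card S) \<le> x"
      using cnt R21 unfolding S_def x_def by auto
    define xd where "xd = x powr (1/d)"
    have xd1: "xd \<ge> 1" unfolding xd_def using x1 d1 by (intro ge_one_powr_ge_zero) auto
    define m where "m = nat \<lceil>xd\<rceil>"
    have m1: "real m \<ge> xd" "real m \<le> 2 * xd" using xd1 unfolding m_def by linarith+
    have mpos: "real m > 0" using m1 xd1 by linarith
    have "xd ^ DIM('a) = x" unfolding xd_def using x1 d1
      by (simp add: powr_power d_def)
    then have "x \<le> real m ^ DIM('a)" using power_mono[OF m1(1), of "DIM('a)"] xd1 by simp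
    also have "real m ^ DIM('a) < real (2*m+1) ^ DIM('a)"
      by (intro power_strict_mono) auto
    finally have "real (card S) < real ((2*m+1)^DIM('a))" using cardS by simp
    then have cardlt: "card S < (2*m+1)^DIM('a)" by (simp only: of_nat_less_iff)
    define \<rho> where "\<rho> = R / (2 * m * d)"
    have rho: "\<rho> > 0" using R1 mpos d1 unfolding \<rho>_def by simp
    obtain c where c: "norm c \<le> 2*\<rho>*m*DIM('a)" and cS: "\<forall>l\<in>S. \<rho> \<le> norm (l - c)"
      using hole[OF finS rho cardlt] by blast
    have "2*\<rho>*m*DIM('a) = R" unfolding \<rho>_def d_def using mpos d1 d_def by simp
    with c have cR: "norm c \<le> R" by simp
    have rhob: "\<rho> powr (-\<beta>) \<le> (4 * d * xd / R) powr \<beta>"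
    proof -
      have "\<rho> powr (-\<beta>) = (1/\<rho>) powr \<beta>" using rho by (simp add: powr_minus_divide powr_divide)
      also have "1/\<rho> = 2 * m * d / R" unfolding \<rho>_def by simp
      also have "(2 * m * d / R) powr \<beta> \<le> (4 * d * xd / R) powr \<beta>"
        using m1 mpos d1 R1 bpos by (intro powr_mono2 divide_right_mono) auto
      finally show ?thesis .
    qed
    have near: "sum (g c) S \<le> Nb R"
    proof -
      have "sum (g c) S \<le> (\<Sum>l\<in>S. C\<^sup>2 * \<rho> powr (-\<beta>))"
      proof (rule sum_mono)
        fix l assume l: "l \<in> S"
        then have lr: "\<rho> \<le> norm (l - c)" using cS by auto
        then have "l \<noteq> c" using rho by auto
        then have "g c l \<le> C\<^sup>2 * norm (l - c) powr (-\<beta>)" by (rule gb)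
        also have "\<dots> \<le> C\<^sup>2 * \<rho> powr (-\<beta>)"
          using powr_mono2'[of "-\<beta>" \<rho> "norm (l - c)"] lr rho bpos by (intro mult_left_mono) auto
        finally show "g c l \<le> C\<^sup>2 * \<rho> powr (-\<beta>)" .
      qed
      also have "\<dots> = real (card S) * (C\<^sup>2 * \<rho> powr (-\<beta>))" by simp
      also have "\<dots> \<le> x * (C\<^sup>2 * (4 * d * xd / R) powr \<beta>)"
        using cardS rhob by (intro mult_mono mult_left_mono) auto
      also have "\<dots> = Nb R" unfolding Nb_def x_def xd_def by (simp add: mult_ac)
      finally show ?thesis .
    qed
    have summ: "g c summable_on \<Lambda>" using low by blast
    have far: "infsum (g c) (\<Lambda> - ball 0 (2*R)) \<le> Fb R"
    proof -
      have "infsum (g c) (\<Lambda> - ball 0 (2*R)) \<le> (C\<^sup>2 * 2 powr \<beta>) * C' * 2 powr \<alpha> * (2*R) powr (\<alpha> - \<beta>) / (1 - 2 powr (\<alpha> - \<beta>))"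
      proof (rule far_sum[OF cnt ab bpos R21])
        show "0 \<le> C\<^sup>2 * 2 powr \<beta>" by simp
        show "g c summable_on \<Lambda> - ball 0 (2 * R)"
          using summ by (rule summable_on_subset_banach) auto
        fix l assume l: "l \<in> \<Lambda>" "2 * R \<le> norm l"
        have "norm (l - c) \<ge> norm l - norm c" by (rule norm_triangle_ineq2)
        then have lc: "norm (l - c) \<ge> norm l / 2" using cR l by linarith
        have lpos: "norm l / 2 > 0" using l R1 by linarith
        then have "l \<noteq> c" using lc by auto
        then have "g c l \<le> C\<^sup>2 * norm (l - c) powr (-\<beta>)" by (rule gb)
        also have "\<dots> \<le> C\<^sup>2 * (norm l / 2) powr (-\<beta>)"
          using powr_mono2'[of "-\<beta>" "norm l / 2" "norm (l - c)"] lc lpos bpos by (intro mult_left_mono) auto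
        also have "(norm l / 2) powr (-\<beta>) = 2 powr \<beta> * norm l powr (-\<beta>)"
        proof -
          have "(norm l / 2) powr (-\<beta>) = norm l powr (-\<beta>) / 2 powr (-\<beta>)" by (rule powr_divide)
          also have "2 powr (-\<beta>) = inverse (2 powr \<beta>)" by (rule powr_minus)
          finally show ?thesis by (simp only: divide_inverse inverse_inverse_eq mult.commute)
        qed
        finally show "0 \<le> g c l \<and> g c l \<le> C\<^sup>2 * 2 powr \<beta> * norm l powr (-\<beta>)"
          using g0 by (simp add: mult_ac)
      qed
      then show ?thesis unfolding Fb_def by (simp add: mult_ac)
    qed
    have split: "\<Lambda> = S \<union> (\<Lambda> - ball 0 (2*R))" "S \<inter> (\<Lambda> - ball 0 (2*R)) = {}"
      unfolding S_def by auto
    have "infsum (g c) \<Lambda> = infsum (g c) S + infsum (g c) (\<Lambda> - ball 0 (2*R))"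
      using infsum_Un_disjoint[OF summable_on_subset_banach[OF summ] summable_on_subset_banach[OF summ] split(2)]
        split(1) by auto
    also have "\<dots> \<le> Nb R + Fb R" using near far finS by simp
    finally show ?thesis using low[of c] by linarith
  qed
  have "eventually (\<lambda>R. Nb R + Fb R < A * N) at_top"
    using order_tendstoD(2)[OF lim] AB Npos unfolding N_def by simp
  moreover have "eventually (\<lambda>R. R \<ge> (1::real)) at_top" by (rule eventually_ge_at_top)
  ultimately obtain R where "Nb R + Fb R < A * N" "R \<ge> 1"
    by (metis (mono_tags, lifting) eventually_at_top_linorder eventually_conj_iff order.refl)
  then show False using bound by fastforce
qed


theorem lemma3p2:
  fixes M :: "'a::euclidean_space measure" and \<beta> \<alpha> :: real and \<Lambda> :: "'a set"
  assumes "sets M = sets borel" and "finite_measure M"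
    and "0 < \<beta>" and "\<beta> \<le> real DIM('a)"
    and "\<exists>\<phi> C. in_L2 M \<phi> \<and> L2_norm_sq M \<phi> > 0 \<and> C > 0 \<and>
           (\<forall>t. t \<noteq> 0 \<longrightarrow> cmod (fourier_dens M \<phi> t) \<le> C * norm t powr (- \<beta> / 2))"
    and "countable \<Lambda>" and "fourier_frame M \<Lambda>"
    and "\<exists>C'. \<forall>r\<ge>1. finite (\<Lambda> \<inter> ball 0 r) \<and> real (card (\<Lambda> \<inter> ball 0 r)) \<le> C' * r powr \<alpha>"
  shows "\<alpha> \<ge> inverse (1 / \<beta> + 1 / real DIM('a))"
proof (rule ccontr)
  define \<tau> where "\<tau> = inverse (1 / \<beta> + 1 / real DIM('a))"
  assume "\<not> \<alpha> \<ge> inverse (1 / \<beta> + 1 / real DIM('a))"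
  then have alt: "\<alpha> < \<tau>" unfolding \<tau>_def by simp
  have taupos: "\<tau> > 0" unfolding \<tau>_def using assms(3) by (simp add: add_pos_pos)
  obtain \<phi> C where ph: "in_L2 M \<phi>" "L2_norm_sq M \<phi> > 0" "C > 0"
      "\<forall>t. t \<noteq> 0 \<longrightarrow> cmod (fourier_dens M \<phi> t) \<le> C * norm t powr (- \<beta> / 2)"
    using assms(5) by blast
  obtain C' where C': "\<forall>r\<ge>1. finite (\<Lambda> \<inter> ball 0 r) \<and> real (card (\<Lambda> \<inter> ball 0 r)) \<le> C' * r powr \<alpha>"
    using assms(8) by blast
  define \<alpha>' where "\<alpha>' = max \<alpha> (\<tau>/2)"
  define C'' where "C'' = max C' 1"
  have cnt: "\<forall>r\<ge>1. finite (\<Lambda> \<inter> ball 0 r) \<and> real (card (\<Lambda> \<inter> ball 0 r)) \<le> C'' * r powr \<alpha>'"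
  proof (intro allI impI conjI)
    fix r :: real assume r: "r \<ge> 1"
    show "finite (\<Lambda> \<inter> ball 0 r)" using C' r by blast
    have "real (card (\<Lambda> \<inter> ball 0 r)) \<le> C' * r powr \<alpha>" using C' r by blast
    also have "\<dots> \<le> C'' * r powr \<alpha>" unfolding C''_def by (intro mult_right_mono) auto
    also have "\<dots> \<le> C'' * r powr \<alpha>'" unfolding C''_def \<alpha>'_def using r
      by (intro mult_left_mono powr_mono) auto
    finally show "real (card (\<Lambda> \<inter> ball 0 r)) \<le> C'' * r powr \<alpha>'" .
  qed
  have a'pos: "0 < \<alpha>'" unfolding \<alpha>'_def using taupos by simp
  have a'lt: "\<alpha>' < inverse (1/\<beta> + 1/real DIM('a))" unfolding \<alpha>'_def \<tau>_def[symmetric] using alt taupos by simp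
  show False
    using core[OF assms(1) assms(3) assms(4) ph(1) ph(2) ph(3) ph(4) assms(7) cnt _ a'pos a'lt]
    unfolding C''_def by simp
qed

end
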